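(* For every integer $L\geq 0$, \[ \sum_{j=-\infty}^{\infty} (-1)^j q^{j^2} \left(\frac{j+1}{3}\right) {2L+1 \brack L+j}_{q^2} = \frac{(q^3;q^6)_L}{(q;q^2)_{L+1}}\,\bigl(1-q^{2(1+2L)}\bigr). \]
   Context: For a variable $a$ and integer $n\ge 0$, $(a;q)_n=(1-a)(1-aq)\cdots(1-aq^{n-1})$ (with $(a;q)_0=1$). The $q$-binomial coefficient is ${A \brack B}_q=\frac{(q;q)_A}{(q;q)_B(q;q)_{A-B}}$ if $0\le B\le A$ are integers, and $0$ otherwise; ${A\brack B}_{q^2}$ is the same with $q$ replaced by $q^2$. $\left(\frac{j}{3}\right)$ is the Legendre symbol modulo 3: it equals $1$ if $j\equiv 1 \pmod 3$, $-1$ if $j\equiv -1\pmod 3$, and $0$ if $3\mid j$. *)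

theory Defs
  imports Main
begin

definition qpoch :: "'a::comm_ring_1 \<Rightarrow> 'a \<Rightarrow> nat \<Rightarrow> 'a" where
  "qpoch a q n = (\<Prod>i<n. (1 - a * q ^ i))"

definition qbinom :: "'a::field \<Rightarrow> int \<Rightarrow> int \<Rightarrow> 'a" where
  "qbinom q A B = (if 0 \<le> B \<and> B \<le> A
     then qpoch q q (nat A) / (qpoch q q (nat B) * qpoch q q (nat (A - B)))
     else 0)"

definition leg3 :: "int \<Rightarrow> int" where
  "leg3 j = (if j mod 3 = 1 then 1 else if j mod 3 = 2 then -1 else 0)"

end

theory Submission
  imports Defs "HOL-Computational_Algebra.Polynomial" "HOL-Number_Theory.Cong"
begin

fun gb :: "'a::comm_ring_1 \<Rightarrow> nat \<Rightarrow> nat \<Rightarrow> 'a" where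
  "gb p n 0 = 1"
| "gb p 0 (Suc k) = 0"
| "gb p (Suc n) (Suc k) = gb p n (Suc k) + p ^ (n - k) * gb p n k"

lemma gb_zero: "n < k \<Longrightarrow> gb p n k = 0"
proof (induction n arbitrary: k)
  case 0 then show ?case by (cases k) auto
next
  case (Suc n) then show ?case by (cases k) auto
qed

lemma qpoch_Suc: "qpoch a q (Suc n) = qpoch a q n * (1 - a * q ^ n)"
  by (simp add: qpoch_def)

lemma gb_qpoch: "k \<le> n \<Longrightarrow> gb p n k * qpoch p p k * qpoch p p (n - k) = qpoch p p n"
proof (induction n arbitrary: k)
  case 0 then show ?case by (simp add: qpoch_def)
next
  case (Suc n k)
  show ?case
  proof (cases k)
    case 0 then show ?thesis by (simp add: qpoch_def)
  next
    case (Suc k')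
    show ?thesis
    proof (cases "k' < n")
      case True
      have i1: "gb p n (Suc k') * qpoch p p (Suc k') * qpoch p p (n - Suc k') = qpoch p p n"
        using Suc.IH True by simp
      have i2: "gb p n k' * qpoch p p k' * qpoch p p (n - k') = qpoch p p n"
        using Suc.IH True by simp
      have e: "n - k' = Suc (n - Suc k')" using True by simp
      have pw: "p ^ (n - k') * p ^ Suc k' = p ^ Suc n"
      proof -
        have "n - k' + Suc k' = Suc n" using True by simp
        then show ?thesis by (metis power_add)
      qed
      have "gb p (Suc n) k * qpoch p p k * qpoch p p (Suc n - k)
          = (gb p n (Suc k') + p ^ (n - k') * gb p n k') * (qpoch p p k' * (1 - p * p ^ k'))
             * (qpoch p p (n - Suc k') * (1 - p * p ^ (n - Suc k')))"
        using Suc e by (simp add: qpoch_Suc)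
      also have "\<dots> = (gb p n (Suc k') * qpoch p p (Suc k') * qpoch p p (n - Suc k')) * (1 - p ^ (n - k'))
           + p ^ (n - k') * (gb p n k' * qpoch p p k' * qpoch p p (n - k')) * (1 - p ^ Suc k')"
        using e by (simp add: qpoch_Suc algebra_simps)
      also have "\<dots> = qpoch p p n * (1 - p ^ (n - k') * p ^ Suc k')"
        using i1 i2 by (simp add: algebra_simps)
      also have "\<dots> = qpoch p p (Suc n)" using pw by (simp add: qpoch_Suc)
      finally show ?thesis .
    next
      case False
      then have kn: "k' = n" using Suc Suc.prems by simp
      have i2: "gb p n n * qpoch p p n * qpoch p p 0 = qpoch p p n"
        using Suc.IH[of n] by simp
      show ?thesis using Suc kn i2 gb_zero[of n "Suc n" p]
        by (simp add: qpoch_Suc qpoch_def[of p p 0] mult.assoc[symmetric])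
    qed
  qed
qed

lemma qbin_thm:
  fixes q t :: "'a::comm_ring_1"
  shows "coeff (\<Prod>i<n. [:1, t * q ^ (2 * i):]) k = gb (q^2) n k * q ^ (k * (k - 1)) * t ^ k"
proof (induction n arbitrary: k)
  case 0 then show ?case by (cases k) auto
next
  case (Suc n k)
  have P: "(\<Prod>i<Suc n. [:1, t * q ^ (2 * i):]) = (\<Prod>i<n. [:1, t * q ^ (2 * i):])
     + pCons 0 (smult (t * q ^ (2 * n)) (\<Prod>i<n. [:1, t * q ^ (2 * i):]))"
    by simp
  show ?case
  proof (cases k)
    case 0 then show ?thesis using Suc.IH[of 0] by (simp add: P)
  next
    case (Suc k')
    show ?thesis
    proof (cases "k' \<le> n")
      case True
      have ex: "q ^ (2 * n) * q ^ (k' * (k' - 1)) = (q^2) ^ (n - k') * q ^ (Suc k' * k')"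
      proof -
        have "2 * n + k' * (k' - 1) = 2 * (n - k') + Suc k' * k'"
          using True by (cases k') (auto simp: algebra_simps)
        then show ?thesis by (simp add: power_add[symmetric] power_mult[symmetric])
      qed
      have "coeff (\<Prod>i<Suc n. [:1, t * q ^ (2 * i):]) k
         = gb (q\<^sup>2) n (Suc k') * q ^ (Suc k' * k') * t ^ Suc k'
           + t * q ^ (2 * n) * (gb (q\<^sup>2) n k' * q ^ (k' * (k' - 1)) * t ^ k')"
        using Suc.IH[of "Suc k'"] Suc.IH[of k'] Suc by (simp add: P)
      also have "\<dots> = gb (q\<^sup>2) n (Suc k') * q ^ (Suc k' * k') * t ^ Suc k'
           + t ^ Suc k' * gb (q\<^sup>2) n k' * (q ^ (2 * n) * q ^ (k' * (k' - 1)))"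
        by (simp add: algebra_simps)
      also have "\<dots> = gb (q\<^sup>2) n (Suc k') * q ^ (Suc k' * k') * t ^ Suc k'
           + t ^ Suc k' * gb (q\<^sup>2) n k' * ((q^2) ^ (n - k') * q ^ (Suc k' * k'))"
        by (simp only: ex)
      also have "\<dots> = (gb (q\<^sup>2) n (Suc k') + (q^2) ^ (n - k') * gb (q\<^sup>2) n k') * q ^ (Suc k' * k') * t ^ Suc k'"
        by (simp add: algebra_simps)
      finally show ?thesis using Suc by simp
    next
      case False
      then show ?thesis using Suc.IH[of "Suc k'"] Suc.IH[of k'] Suc gb_zero[of n k' "q^2"] gb_zero[of n "Suc k'" "q^2"]
          gb_zero[of "Suc n" "Suc k'" "q^2"]
        by (simp add: P)
    qed
  qed
qed

abbreviation mpoly :: "'a::field poly" where "mpoly \<equiv> [:1, 1, 1:]"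

definition w0 :: "nat \<Rightarrow> int" where
  "w0 e = (if e mod 3 = 0 then 1 else if e mod 3 = 1 then 0 else -1)"
definition w1 :: "nat \<Rightarrow> int" where
  "w1 e = (if e mod 3 = 0 then 0 else if e mod 3 = 1 then 1 else -1)"

lemma X3: "[[:0, 1:] ^ 3 = (1 :: 'a::field poly)] (mod mpoly)"
proof -
  have "[:0, 1:] ^ 3 - (1 :: 'a poly) = mpoly * [:-1, 1:]"
    by (simp add: numeral_3_eq_3 one_pCons)
  then show ?thesis unfolding cong_iff_dvd_diff by (metis dvd_triv_left dvd_refl)
qed

lemma X2: "[[:0, 1:] ^ 2 = ([:-1, -1:] :: 'a::field poly)] (mod mpoly)"
proof -
  have "[:0, 1:] ^ 2 - ([:-1, -1:] :: 'a poly) = mpoly"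
    by (simp add: numeral_2_eq_2 one_pCons)
  then show ?thesis unfolding cong_iff_dvd_diff by (metis dvd_triv_left dvd_refl)
qed

lemma Xpow: "[[:0, 1:] ^ e = ([:of_int (w0 e), of_int (w1 e):] :: 'a::field poly)] (mod mpoly)"
proof -
  have "([:0, 1:] :: 'a poly) ^ e = ([:0, 1:] ^ 3) ^ (e div 3) * [:0, 1:] ^ (e mod 3)"
  proof -
    have "e = 3 * (e div 3) + e mod 3" by simp
    then show ?thesis by (metis power_add power_mult)
  qed
  also have "[\<dots> = 1 ^ (e div 3) * [:0, 1:] ^ (e mod 3)] (mod mpoly)"
    by (intro cong_mult cong_pow X3 cong_refl)
  finally have c: "[([:0, 1:] :: 'a poly) ^ e = [:0, 1:] ^ (e mod 3)] (mod mpoly)" by simp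
  have "e mod 3 = 0 \<or> e mod 3 = 1 \<or> e mod 3 = 2" by arith
  then show ?thesis
  proof (elim disjE)
    assume h: "e mod 3 = 0" then show ?thesis using c by (simp add: w0_def w1_def one_pCons)
  next
    assume h: "e mod 3 = 1" then show ?thesis using c by (simp add: w0_def w1_def)
  next
    assume h: "e mod 3 = 2" then show ?thesis using cong_trans[OF c] X2 by (simp add: w0_def w1_def)
  qed
qed

lemma monom_cong: "[monom c e = ([:c * of_int (w0 e), c * of_int (w1 e):] :: 'a::field poly)] (mod mpoly)"
proof -
  have "monom c e = [:c:] * [:0, 1:] ^ e" by (simp add: monom_altdef)
  also have "[\<dots> = [:c:] * [:of_int (w0 e), of_int (w1 e):]] (mod mpoly)"
    by (intro cong_mult cong_refl Xpow)
  finally show ?thesis by (simp add: ac_simps)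
qed

lemma sum_pair: "(\<Sum>k\<in>A. [:a k, b k:]) = [:(\<Sum>k\<in>A. a k), (\<Sum>k\<in>A. b k):]"
proof (induction A rule: infinite_finite_induct)
  case (infinite A) then show ?case by simp
next
  case empty then show ?case by simp
next
  case (insert x F) then show ?case by simp
qed

lemma extract_cong:
  "[(\<Sum>k\<in>A. monom (c k) (e k)) = ([:(\<Sum>k\<in>A. c k * of_int (w0 (e k))), (\<Sum>k\<in>A. c k * of_int (w1 (e k))):] :: 'a::field poly)] (mod mpoly)"
proof -
  have "[(\<Sum>k\<in>A. monom (c k) (e k)) = (\<Sum>k\<in>A. ([:c k * of_int (w0 (e k)), c k * of_int (w1 (e k)):] :: 'a poly))] (mod mpoly)"
    by (intro cong_sum monom_cong)
  then show ?thesis by (simp add: sum_pair)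
qed

lemma lin_cong_eq:
  assumes "[[:a, b:] = ([:c, d:] :: 'a::field poly)] (mod mpoly)"
  shows "a = c \<and> b = d"
proof -
  have dv: "mpoly dvd [:a - c, b - d:]" using assms by (simp add: cong_iff_dvd_diff)
  have "[:a - c, b - d:] = 0"
  proof (rule ccontr)
    assume "[:a - c, b - d:] \<noteq> 0"
    from dvd_imp_degree_le[OF dv this] show False by (auto split: if_splits)
  qed
  then show ?thesis by simp
qed

lemma pair_cong:
  assumes "x * y = (1::'a::field)"
  shows "[[:1, -x:] * [:1, -y:] = [:0, -(1 + x + y):]] (mod mpoly)"
proof -
  have "[:1, -x:] * [:1, -y:] - [:0, -(1 + x + y):] = (mpoly :: 'a poly)"
    using assms by (simp add: algebra_simps)
  then show ?thesis unfolding cong_iff_dvd_diff by (metis dvd_triv_left dvd_refl)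
qed

lemma prod_lin: "(\<Prod>s<L. [:0, c s:]) = monom (\<Prod>s<L. c s) L"
  by (induction L) (simp_all add: monom_Suc monom_0 smult_monom mult.commute)

lemma prod_split:
  fixes G :: "nat \<Rightarrow> 'b::comm_monoid_mult"
  shows "(\<Prod>i<2*L+1. G i) = G (2*L) * (\<Prod>t<L. G (L + t) * G (L - 1 - t))"
proof (induction L arbitrary: G)
  case 0 then show ?case by simp
next
  case (Suc L G)
  have "(\<Prod>i<2*Suc L+1. G i) = G 0 * (\<Prod>i<2*L+1. G (Suc i)) * G (2 * L + 2)"
  proof -
    have e: "2*Suc L + 1 = Suc (Suc (2*L+1))" by simp
    show ?thesis unfolding e prod.lessThan_Suc[of _ "Suc (2*L+1)"] prod.lessThan_Suc_shift[of _ "2*L+1"]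
      by (simp add: ac_simps)
  qed
  also have "\<dots> = G 0 * (G (Suc (2 * L)) * (\<Prod>t<L. G (Suc (L + t)) * G (Suc (L - 1 - t)))) * G (2 * L + 2)"
    using Suc.IH[of "\<lambda>i. G (Suc i)"] by simp
  also have "(\<Prod>t<L. G (Suc (L + t)) * G (Suc (L - 1 - t))) = (\<Prod>t<L. G (Suc L + t) * G (Suc L - 1 - t))"
    by (intro prod.cong) (auto simp: Suc_diff_Suc)
  finally show ?case by (simp add: ac_simps mult_2 mult_2_right)
qed


lemma leg3_w: "of_int (leg3 (int k - int L + 1)) = (of_int (w0 (k + 2 * L) - w1 (k + 2 * L)) :: 'a::ring_1)"
proof -
  have "leg3 (int k - int L + 1) = w0 (k + 2 * L) - w1 (k + 2 * L)"
    unfolding leg3_def w0_def w1_def by presburger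
  then show ?thesis by simp
qed

lemma m1_pow_eq: "a + 2 * b = c \<Longrightarrow> (-1::'a::ring_1) ^ a = (-1) ^ c"
proof -
  assume "a + 2 * b = c"
  then have "(-1::'a) ^ c = (-1) ^ a * ((-1) ^ 2) ^ b" by (metis power_add power_mult)
  then show ?thesis by simp
qed

lemma sign_abs: "(-1::'a::ring_1) ^ nat \<bar>int k - int L\<bar> = (-1) ^ (k + L)"
proof (cases "k \<le> L")
  case True
  then have "nat \<bar>int k - int L\<bar> = L - k" by simp
  moreover have "(L - k) + 2 * k = k + L" using True by simp
  ultimately show ?thesis using m1_pow_eq by metis
next
  case False
  then have "nat \<bar>int k - int L\<bar> = k - L" by simp
  moreover have "(k - L) + 2 * L = k + L" using False by simp
  ultimately show ?thesis using m1_pow_eq by metis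
qed

lemma sq_exp: "nat ((int k - int L)^2) + 2 * L * k = L * L + k * k"
proof -
  define d where "d = nat ((int k - int L)^2)"
  have "int d = (int k - int L)^2" by (simp add: d_def)
  then have "int (d + 2 * L * k) = int (L * L + k * k)"
    by (simp add: power2_eq_square algebra_simps)
  then show ?thesis unfolding d_def by (simp only: of_nat_eq_iff)
qed

lemma qpoch_nz:
  fixes q :: "'a::field"
  assumes "\<forall>k::nat. k > 0 \<longrightarrow> q ^ k \<noteq> 1"
  shows "qpoch (q^2) (q^2) j \<noteq> 0"
  unfolding qpoch_def
proof -
  have "1 - q^2 * (q^2)^i \<noteq> 0" for i
  proof -
  have "q^2 * (q^2)^i = q ^ (2 * i + 2)" by (metis power_add power_mult add.commute)
  moreover have "q ^ (2 * i + 2) \<noteq> 1" using assms by (metis zero_less_Suc add_2_eq_Suc')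
  ultimately show "1 - q^2 * (q^2)^i \<noteq> 0" by simp
  qed
  then show "(\<Prod>i<j. 1 - q^2 * (q^2)^i) \<noteq> 0" by (simp add: prod_zero_iff)
qed

lemma qbinom_gb:
  fixes q :: "'a::field"
  assumes "\<forall>k::nat. k > 0 \<longrightarrow> q ^ k \<noteq> 1" and "k \<le> n"
  shows "qbinom (q^2) (int n) (int k) = gb (q^2) n k"
proof -
  have "gb (q^2) n k * qpoch (q^2) (q^2) k * qpoch (q^2) (q^2) (n - k) = qpoch (q^2) (q^2) n"
    using gb_qpoch assms(2) by blast
  moreover have "nat (int n - int k) = n - k" using assms(2) by simp
  ultimately show ?thesis using assms qpoch_nz[OF assms(1)]
    unfolding qbinom_def by (simp add: field_simps)
qed

lemma Tprod:
  fixes q :: "'a::field"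
  assumes "q \<noteq> 0"
  shows "(-1) ^ L * q ^ (L * L) * (\<Prod>s<L. -(1 + q^(2*s+1) + inverse (q^(2*s+1))))
       = (\<Prod>s<L. 1 + q^(2*s+1) + (q^(2*s+1))^2)"
proof (induction L)
  case 0 then show ?case by simp
next
  case (Suc L)
  have e: "q ^ (Suc L * Suc L) = q ^ (L * L) * q ^ (2 * L + 1)"
  proof -
    have "Suc L * Suc L = L * L + (2 * L + 1)" by simp
    then show ?thesis by (metis power_add)
  qed
  have x: "(1 + q^(2*L+1) + inverse (q^(2*L+1))) * q^(2*L+1) = 1 + q^(2*L+1) + (q^(2*L+1))^2"
    using assms by (simp add: field_simps power2_eq_square)
  have "(-1) ^ Suc L * q ^ (Suc L * Suc L) * (\<Prod>s<Suc L. -(1 + q^(2*s+1) + inverse (q^(2*s+1))))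
     = ((-1) ^ L * q ^ (L * L) * (\<Prod>s<L. -(1 + q^(2*s+1) + inverse (q^(2*s+1)))))
       * ((1 + q^(2*L+1) + inverse (q^(2*L+1))) * q^(2*L+1))"
    unfolding e by (simp add: algebra_simps)
  also have "\<dots> = (\<Prod>s<Suc L. 1 + q^(2*s+1) + (q^(2*s+1))^2)"
    unfolding x Suc.IH by simp
  finally show ?case .
qed

lemma RHS_eq:
  fixes q :: "'a::field"
  assumes "\<forall>k::nat. k > 0 \<longrightarrow> q ^ k \<noteq> 1"
  shows "qpoch (q^3) (q^6) L / qpoch q (q^2) (L + 1) * (1 - q ^ (2 * (1 + 2 * L)))
     = (\<Prod>s<L. 1 + q^(2*s+1) + (q^(2*s+1))^2) * (1 + q^(2*L+1))"
proof -
  have gen3: "\<And>y::'a. 1 - y^3 = (1-y)*(1+y+y^2)"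
    by (simp add: algebra_simps power2_eq_square power3_eq_cube)
  have e3: "\<And>s. q^3 * (q^6)^s = (q^(2*s+1))^3"
  proof -
    fix s
    have "q^3 * (q^6)^s = q^(3 + 6*s)" by (simp only: power_add power_mult)
    moreover have "(q^(2*s+1))^3 = q^((2*s+1)*3)" by (rule power_mult[symmetric])
    moreover have "3 + 6*s = (2*s+1)*3" by simp
    ultimately show "q^3 * (q^6)^s = (q^(2*s+1))^3" by (simp only:)
  qed
  have a: "qpoch (q^3) (q^6) L = (\<Prod>s<L. 1 - q^(2*s+1)) * (\<Prod>s<L. 1 + q^(2*s+1) + (q^(2*s+1))^2)"
    unfolding qpoch_def prod.distrib[symmetric] e3 gen3 ..
  have b: "qpoch q (q^2) (L + 1) = (\<Prod>s<L. 1 - q^(2*s+1)) * (1 - q^(2*L+1))"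
  proof -
    have "\<And>i. q * (q^2)^i = q^(2*i+1)" by (metis power_mult power_Suc add.commute plus_1_eq_Suc)
    then show ?thesis unfolding qpoch_def by (simp only:) simp
  qed
  have c: "1 - q ^ (2 * (1 + 2 * L)) = (1 - q^(2*L+1)) * (1 + q^(2*L+1))"
  proof -
    have "q ^ (2 * (1 + 2 * L)) = (q^(2*L+1))^2" by (metis power_mult mult.commute add.commute)
    moreover have "\<And>y::'a. 1 - y^2 = (1-y)*(1+y)" by (simp add: power2_eq_square algebra_simps)
    ultimately show ?thesis by (simp only:)
  qed
  have nz1: "(\<Prod>s<L. 1 - q^(2*s+1)) \<noteq> 0"
  proof -
    have "\<And>s. 1 - q^(2*s+1) \<noteq> 0" using assms by (metis add_gr_0 right_minus_eq zero_less_one)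
    then show ?thesis by (simp only: prod_zero_iff finite_lessThan) blast
  qed
  have nz2: "1 - q^(2*L+1) \<noteq> (0::'a)"
    using assms by (metis add_gr_0 right_minus_eq zero_less_one)
  have gen: "\<And>P Q d e :: 'a. P \<noteq> 0 \<Longrightarrow> d \<noteq> 0 \<Longrightarrow> P * Q / (P * d) * (d * e) = Q * e"
    by simp
  show ?thesis unfolding a b c using gen[OF nz1 nz2] by simp
qed

lemma term_eq:
  fixes q :: "'a::field"
  assumes nz: "q \<noteq> 0" and ass: "\<forall>k::nat. k > 0 \<longrightarrow> q ^ k \<noteq> 1" and kn: "k \<le> 2 * L + 1"
  shows "(-1) ^ nat \<bar>int k - int L\<bar> * q ^ nat ((int k - int L)^2) * of_int (leg3 (int k - int L + 1))
            * qbinom (q^2) (2 * int L + 1) (int L + (int k - int L))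
       = (-1) ^ L * q ^ (L * L) * (gb (q^2) (2 * L + 1) k * q ^ (k * (k - 1)) * (-(q * inverse q ^ (2 * L))) ^ k
            * of_int (w0 (k + 2 * L) - w1 (k + 2 * L)))"
proof -
  have qb: "qbinom (q^2) (2 * int L + 1) (int L + (int k - int L)) = gb (q^2) (2 * L + 1) k"
    using qbinom_gb[OF ass kn] by (simp add: add.commute)
  define P where "P = q ^ nat ((int k - int L)^2)"
  have P: "P * (q ^ (2 * L)) ^ k = q ^ (L * L) * q ^ (k * (k - 1)) * q ^ k"
  proof -
    have "P * (q ^ (2 * L)) ^ k = q ^ (nat ((int k - int L)^2) + 2 * L * k)"
      unfolding P_def by (simp add: power_add power_mult)
    also have "\<dots> = q ^ (L * L + k * (k - 1) + k)"
    proof -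
      have "k * (k - 1) + k = k * k" by (cases k) auto
      then show ?thesis using sq_exp[of k L] by (simp add: add.assoc)
    qed
    finally show ?thesis by (simp add: power_add)
  qed
  have tk: "(-(q * inverse q ^ (2 * L))) ^ k = (-1) ^ k * q ^ k * inverse ((q ^ (2 * L)) ^ k)"
  proof -
    have "(-(q * inverse q ^ (2 * L))) ^ k = (-1) ^ k * (q * inverse q ^ (2 * L)) ^ k"
      by (rule power_minus)
    also have "\<dots> = (-1) ^ k * (q ^ k * (inverse q ^ (2 * L)) ^ k)"
      by (simp only: power_mult_distrib)
    also have "(inverse q ^ (2 * L)) ^ k = inverse ((q ^ (2 * L)) ^ k)"
      by (simp only: power_inverse)
    finally show ?thesis by (simp only: mult.assoc)
  qed
  have sg: "(-1::'a) ^ (k + L) = (-1) ^ L * (-1) ^ k" by (simp add: power_add)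
  have nzB: "(q ^ (2 * L)) ^ k \<noteq> 0" using nz by simp
  have P2: "P = q ^ (L * L) * q ^ (k * (k - 1)) * q ^ k * inverse ((q ^ (2 * L)) ^ k)"
  proof -
    have "P = (P * (q ^ (2 * L)) ^ k) * inverse ((q ^ (2 * L)) ^ k)" using nzB by simp
    then show ?thesis by (simp only: P)
  qed
  show ?thesis
    unfolding sign_abs leg3_w qb tk sg P_def[symmetric] P2
    by (simp add: ac_simps)
qed


lemma main_nz:
  fixes q :: "'a::field" and L :: nat
  assumes nz: "q \<noteq> 0" and ass: "\<forall>k::nat. k > 0 \<longrightarrow> q ^ k \<noteq> 1"
  shows "(\<Sum>j\<in>{- int L .. int L + 1}.
            (-1) ^ nat \<bar>j\<bar> * q ^ nat (j^2) * of_int (leg3 (j + 1))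
            * qbinom (q^2) (2 * int L + 1) (int L + j))
         = qpoch (q^3) (q^6) L / qpoch q (q^2) (L + 1) * (1 - q ^ (2 * (1 + 2 * L)))"
proof -
  define n where "n = 2 * L + 1"
  define t where "t = -(q * inverse q ^ (2 * L))"
  define G where "G = (\<lambda>i. [:1, t * q ^ (2 * i):] :: 'a poly)"
  define F where "F = (\<Prod>i<n. G i)"
  define xs where "xs = (\<lambda>s::nat. q ^ (2 * s + 1))"
  define V where "V = (\<Prod>s<L. -(1 + xs s + inverse (xs s)))"
  define y where "y = q ^ (2 * L + 1)"
  define A0 where "A0 = (\<Sum>k\<le>n. coeff F k * of_int (w0 (k + 2 * L)))"
  define A1 where "A1 = (\<Sum>k\<le>n. coeff F k * of_int (w1 (k + 2 * L)))"
  have cF: "\<And>k. coeff F k = gb (q^2) n k * q ^ (k * (k - 1)) * t ^ k"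
    unfolding F_def G_def by (rule qbin_thm)
  have degF: "degree F \<le> n"
    by (rule degree_le) (simp add: cF gb_zero)
  have shifted: "monom 1 (2 * L) * F = (\<Sum>k\<le>n. monom (coeff F k) (k + 2 * L))"
  proof -
    have "monom 1 (2 * L) * F = monom 1 (2 * L) * (\<Sum>k\<le>n. monom (coeff F k) k)"
      using poly_as_sum_of_monoms'[OF degF] by simp
    also have "\<dots> = (\<Sum>k\<le>n. monom (coeff F k) (k + 2 * L))"
      by (simp add: sum_distrib_left mult_monom add.commute)
    finally show ?thesis .
  qed
  have c1: "[monom 1 (2 * L) * F = [:A0, A1:]] (mod mpoly)"
    unfolding shifted A0_def A1_def by (rule extract_cong)
  have xinv: "\<And>s. xs s * inverse (xs s) = 1"
  proof -
    fix s
    have "xs s \<noteq> 0" using nz by (simp add: xs_def)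
    then show "xs s * inverse (xs s) = 1" by (rule right_inverse)
  qed
  have G1: "\<And>s. G (L + s) = [:1, -(xs s):]"
  proof -
    fix s
    have "t * q ^ (2 * (L + s)) = -(q * q ^ (2 * s) * (q ^ (2 * L) * inverse (q ^ (2 * L))))"
      unfolding t_def by (simp add: power_add power_inverse ac_simps)
    also have "\<dots> = -(xs s)" using nz by (simp add: xs_def)
    finally show "G (L + s) = [:1, -(xs s):]" by (simp add: G_def)
  qed
  have G2: "\<And>s. s < L \<Longrightarrow> G (L - 1 - s) = [:1, -inverse (xs s):]"
  proof -
    fix s assume sL: "s < L"
    have ex: "q ^ (2 * L) = q ^ (2 * (L - 1 - s)) * q ^ (2 * s + 1) * q"
    proof -
      have "2 * L = 2 * (L - 1 - s) + (2 * s + 1) + 1" using sL by simp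
      then show ?thesis by (metis power_add power_one_right)
    qed
    have "t * q ^ (2 * (L - 1 - s)) = -(q * q ^ (2 * (L - 1 - s)) * inverse (q ^ (2 * L)))"
      unfolding t_def by (simp add: power_inverse ac_simps)
    also have "\<dots> = -inverse (xs s)"
      unfolding ex xs_def using nz by (simp add: field_simps)
    finally show "G (L - 1 - s) = [:1, -inverse (xs s):]" by (simp add: G_def)
  qed
  have G3: "G (2 * L) = [:1, -y:]"
  proof -
    have "t * q ^ (2 * (2 * L)) = -(q * q ^ (2 * L) * (q ^ (2 * L) * inverse (q ^ (2 * L))))"
      unfolding t_def by (simp add: power_inverse ac_simps flip: power_add mult_2)
    also have "\<dots> = -y" using nz by (simp add: y_def power_add)
    finally show ?thesis by (simp add: G_def)
  qed
  have pairs: "\<And>s. s \<in> {..<L} \<Longrightarrow> [G (L + s) * G (L - 1 - s) = [:0, -(1 + xs s + inverse (xs s)):]] (mod mpoly)"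
    using G1 G2 pair_cong[OF xinv] by simp
  have FG: "F = G (2 * L) * (\<Prod>s<L. G (L + s) * G (L - 1 - s))"
    unfolding F_def n_def by (rule prod_split)
  have "[F = G (2 * L) * (\<Prod>s<L. [:0, -(1 + xs s + inverse (xs s)):])] (mod mpoly)"
    unfolding FG by (intro cong_mult cong_refl cong_prod pairs)
  then have c2: "[F = [:1, -y:] * monom V L] (mod mpoly)"
    unfolding prod_lin G3 V_def .
  have "[monom 1 (2 * L) * F = monom 1 (2 * L) * ([:1, -y:] * monom V L)] (mod mpoly)"
    by (intro cong_mult cong_refl c2)
  also have "monom 1 (2 * L) * ([:1, -y:] * monom V L) = [:1, -y:] * ([:V:] * ([:0, 1:] ^ 3) ^ L)"
  proof -
    have a: "monom 1 (2 * L) * ([:1, -y:] * monom V L) = [:1, -y:] * (monom 1 (2 * L) * monom V L)"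
      by (simp only: ac_simps)
    have b: "monom 1 (2 * L) * monom V L = monom V (3 * L)"
      by (simp add: mult_monom)
    have c: "monom V (3 * L) = [:V:] * ([:0, 1:] ^ 3) ^ L"
      by (simp add: monom_altdef power_mult)
    show ?thesis unfolding a b c ..
  qed
  also have "[\<dots> = [:1, -y:] * ([:V:] * 1 ^ L)] (mod mpoly)"
    by (intro cong_mult cong_refl cong_pow X3)
  also have "[:1, -y:] * ([:V:] * 1 ^ L) = [:V, -(y * V):]" by simp
  finally have c3: "[monom 1 (2 * L) * F = [:V, -(y * V):]] (mod mpoly)" .
  have "[[:A0, A1:] = [:V, -(y * V):]] (mod mpoly)"
    using cong_trans[OF cong_sym[OF c1] c3] .
  then have AV: "A0 = V" "A1 = -(y * V)" using lin_cong_eq by blast+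
  have img: "{- int L .. int L + 1} = (\<lambda>k. int k - int L) ` {..n}"
  proof (rule set_eqI, rule iffI)
    fix j assume "j \<in> {- int L .. int L + 1}"
    then have "nat (j + int L) \<in> {..n}" "j = int (nat (j + int L)) - int L" by (auto simp: n_def)
    then show "j \<in> (\<lambda>k. int k - int L) ` {..n}" by blast
  qed (auto simp: n_def)
  have inj: "inj_on (\<lambda>k. int k - int L) {..n}" by (rule inj_onI) simp
  have "(\<Sum>j\<in>{- int L .. int L + 1}.
            (-1) ^ nat \<bar>j\<bar> * q ^ nat (j^2) * of_int (leg3 (j + 1))
            * qbinom (q^2) (2 * int L + 1) (int L + j))
      = (\<Sum>k\<le>n. (-1) ^ L * q ^ (L * L) * (coeff F k * of_int (w0 (k + 2 * L) - w1 (k + 2 * L))))"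
    unfolding img sum.reindex[OF inj] o_def
  proof (rule sum.cong[OF refl])
    fix k assume "k \<in> {..n}"
    then have kn: "k \<le> 2 * L + 1" by (simp add: n_def)
    show "(-1) ^ nat \<bar>int k - int L\<bar> * q ^ nat ((int k - int L)^2) * of_int (leg3 (int k - int L + 1))
            * qbinom (q^2) (2 * int L + 1) (int L + (int k - int L))
        = (-1) ^ L * q ^ (L * L) * (coeff F k * of_int (w0 (k + 2 * L) - w1 (k + 2 * L)))"
      unfolding term_eq[OF nz ass kn] cF n_def t_def by (simp add: ac_simps)
  qed
  also have "\<dots> = (-1) ^ L * q ^ (L * L) * (A0 - A1)"
    unfolding A0_def A1_def by (simp add: sum_distrib_left sum_subtractf algebra_simps)
  also have "\<dots> = ((-1) ^ L * q ^ (L * L) * V) * (1 + y)"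
    unfolding AV by (simp add: algebra_simps)
  also have "\<dots> = (\<Prod>s<L. 1 + q^(2*s+1) + (q^(2*s+1))^2) * (1 + q^(2*L+1))"
    unfolding V_def xs_def y_def Tprod[OF nz] ..
  also have "\<dots> = qpoch (q^3) (q^6) L / qpoch q (q^2) (L + 1) * (1 - q ^ (2 * (1 + 2 * L)))"
    using RHS_eq[OF ass] by simp
  finally show ?thesis .
qed
lemma qpoch_zero: "qpoch (0::'a::comm_ring_1) b n = 1"
  by (simp add: qpoch_def)

theorem theorem2p3:
  fixes q :: "'a::field" and L :: nat
  assumes "\<forall>k::nat. k > 0 \<longrightarrow> q ^ k \<noteq> 1"
  shows "(\<Sum>j\<in>{- int L .. int L + 1}.
            (-1) ^ nat \<bar>j\<bar> * q ^ nat (j^2) * of_int (leg3 (j + 1))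
            * qbinom (q^2) (2 * int L + 1) (int L + j))
         = qpoch (q^3) (q^6) L / qpoch q (q^2) (L + 1) * (1 - q ^ (2 * (1 + 2 * L)))"
proof (cases "q = 0")
  case False
  then show ?thesis using main_nz assms by blast
next
  case True
  have z: "\<And>j. j \<in> {- int L .. int L + 1} - {0} \<Longrightarrow>
      (-1) ^ nat \<bar>j\<bar> * q ^ nat (j^2) * of_int (leg3 (j + 1)) * qbinom (q^2) (2 * int L + 1) (int L + j) = 0"
  proof -
    fix j :: int assume "j \<in> {- int L .. int L + 1} - {0}"
    then have "nat (j^2) > 0" by simp
    then show "(-1) ^ nat \<bar>j\<bar> * q ^ nat (j^2) * of_int (leg3 (j + 1)) * qbinom (q^2) (2 * int L + 1) (int L + j) = 0"
      using True by simp
  qed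
  have mem: "(0::int) \<in> {- int L .. int L + 1}" by simp
  have "(\<Sum>j\<in>{- int L .. int L + 1}.
            (-1) ^ nat \<bar>j\<bar> * q ^ nat (j^2) * of_int (leg3 (j + 1))
            * qbinom (q^2) (2 * int L + 1) (int L + j))
      = (-1) ^ nat \<bar>0::int\<bar> * q ^ nat (0^2) * of_int (leg3 (0 + 1)) * qbinom (q^2) (2 * int L + 1) (int L + 0)"
  proof -
    have s0: "(\<Sum>j\<in>{- int L .. int L + 1} - {0}.
            (-1) ^ nat \<bar>j\<bar> * q ^ nat (j^2) * of_int (leg3 (j + 1))
            * qbinom (q^2) (2 * int L + 1) (int L + j)) = 0"
      using z by (intro sum.neutral) blast
    show ?thesis unfolding sum.remove[OF finite_atLeastAtMost_int mem] s0 by simp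
  qed
  also have "\<dots> = 1"
    using True by (simp add: leg3_def qbinom_def qpoch_zero)
  also have "\<dots> = qpoch (q^3) (q^6) L / qpoch q (q^2) (L + 1) * (1 - q ^ (2 * (1 + 2 * L)))"
    using True by (simp add: qpoch_zero)
  finally show ?thesis .
qed

end
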